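(* Let $s \ge p \ge 2$ be real numbers and let $h:\mathbb{R}^d\to\mathbb{R}$, $h(z) = \|z\|_p^s$. Then for all $z_a, z_b \in \mathbb{R}^d$, \[ \omega_h(z_a,z_b) + \omega_h(z_b,z_a) \;\ge\; \frac{4s}{2^s}\,\|z_a - z_b\|_p^s , \] equivalently $\langle \nabla h(z_a) - \nabla h(z_b),\, z_a - z_b\rangle \ge \frac{4s}{2^s}\|z_a-z_b\|_p^s$.
   Context: $\|z\|_p = (\sum_{i=1}^d |z_i|^p)^{1/p}$. For a differentiable function $h$, the Bregman divergence is $\omega_h(x,y) = h(x) - h(y) - \langle \nabla h(y), x - y\rangle$. *)

theory Defs
  imports "HOL-Analysis.Analysis"
begin

(* p-norm on R^d, with R^d rendered as real^'d (d = CARD('d)) *)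
definition pnorm :: "real \<Rightarrow> real ^ 'd \<Rightarrow> real" where
  "pnorm p z = (\<Sum>i\<in>UNIV. \<bar>z $ i\<bar> powr p) powr (1 / p)"

definition grad :: "(real ^ 'd \<Rightarrow> real) \<Rightarrow> real ^ 'd \<Rightarrow> real ^ 'd" where
  "grad h y = (SOME g. (h has_derivative (\<lambda>v. g \<bullet> v)) (at y))"

definition bregman :: "(real ^ 'd \<Rightarrow> real) \<Rightarrow> real ^ 'd \<Rightarrow> real ^ 'd \<Rightarrow> real" where
  "bregman h x y = h x - h y - grad h y \<bullet> (x - y)"

end

theory Submission
  imports Defs
begin
lemma abs_powr_deriv:
  fixes r x :: real
  assumes "1 < r"
  shows "((\<lambda>y. \<bar>y\<bar> powr r) has_real_derivative (r * \<bar>x\<bar> powr (r - 1) * sgn x)) (at x)"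
proof -
  consider "x > 0" | "x < 0" | "x = 0" by linarith
  then show ?thesis
  proof cases
    case 1
    have ev: "eventually (\<lambda>y. \<bar>y\<bar> powr r = y powr r) (nhds x)"
      using eventually_nhds_in_open[of "{0<..}" x] 1
      by (auto elim!: eventually_mono)
    have "((\<lambda>y. y powr r) has_real_derivative (r * x powr (r - 1))) (at x)"
      using has_real_derivative_powr[OF 1] .
    then show ?thesis
      using 1 by (subst DERIV_cong_ev[OF refl ev refl]) auto
  next
    case 2
    have ev: "eventually (\<lambda>y. \<bar>y\<bar> powr r = (- y) powr r) (nhds x)"
      using eventually_nhds_in_open[of "{..<0}" x] 2
      by (auto elim!: eventually_mono)
    have "((\<lambda>y. (- y) powr r) has_real_derivative (r * (- x) powr (r - 1) * (- 1))) (at x)"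
      using 2 by (auto intro!: derivative_eq_intros)
    then show ?thesis
      using 2 by (subst DERIV_cong_ev[OF refl ev refl]) auto
  next
    case 3
    have lim: "((\<lambda>y. \<bar>y\<bar> powr (r - 1)) \<longlongrightarrow> 0) (at 0)"
      by (rule tendsto_zero_powrI) (auto intro!: tendsto_eq_intros simp: assms)
    have "((\<lambda>y. (\<bar>y\<bar> powr r - \<bar>0\<bar> powr r) / (y - 0)) \<longlongrightarrow> 0) (at 0)"
    proof (rule Lim_null_comparison[OF _ lim])
      show "\<forall>\<^sub>F y in at 0. norm ((\<bar>y\<bar> powr r - \<bar>0\<bar> powr r) / (y - 0)) \<le> \<bar>y\<bar> powr (r - 1)"
        using assms by (auto simp: eventually_at_filter powr_diff abs_divide)
    qed
    then show ?thesis using 3 by (simp add: has_field_derivative_iff)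
  qed
qed




definition phi :: "real \<Rightarrow> real \<Rightarrow> real" where
  "phi p x = \<bar>x\<bar> powr (p - 1) * sgn x"

lemma powr_le_self:
  fixes z r :: real
  assumes "0 \<le> z" "z \<le> 1" "1 \<le> r"
  shows "z powr r \<le> z"
  using assms powr_le_one_le[of z r] by (cases "z = 0") auto

lemma superadd:
  fixes r y d :: real
  assumes "1 \<le> r" "0 \<le> y" "0 \<le> d"
  shows "y powr r + d powr r \<le> (y + d) powr r"
proof (cases "y + d = 0")
  case True
  then have "y = 0" "d = 0" using assms by auto
  then show ?thesis by simp
next
  case False
  then have pos: "0 < y + d" using assms by auto
  have a: "(y / (y + d)) powr r \<le> y / (y + d)"
    using assms pos by (intro powr_le_self) (auto simp: divide_le_eq)
  have b: "(d / (y + d)) powr r \<le> d / (y + d)"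
    using assms pos by (intro powr_le_self) (auto simp: divide_le_eq)
  have "(y powr r + d powr r) / (y + d) powr r = (y / (y + d)) powr r + (d / (y + d)) powr r"
    using assms pos by (simp add: powr_divide add_divide_distrib)
  also have "\<dots> \<le> y / (y + d) + d / (y + d)" using a b by linarith
  also have "\<dots> = 1" using pos by (simp add: add_divide_distrib[symmetric])
  finally show ?thesis using pos by (simp add: divide_le_eq)
qed

lemma powmean:
  fixes r x y :: real
  assumes "1 \<le> r" "0 \<le> x" "0 \<le> y"
  shows "((x + y) / 2) powr r \<le> (x powr r + y powr r) / 2"
proof -
  consider "x = 0" | "y = 0" | "0 < x \<and> 0 < y" using assms by linarith
  then show ?thesis
  proof cases
    case 1
    have "(y / 2) powr r = y powr r / 2 powr r" using assms by (simp add: powr_divide)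
    also have "\<dots> \<le> y powr r / 2"
      using assms by (intro divide_left_mono) (auto intro: order_trans[OF _ powr_mono[of 1 r 2]])
    finally show ?thesis using 1 by simp
  next
    case 2
    have "(x / 2) powr r = x powr r / 2 powr r" using assms by (simp add: powr_divide)
    also have "\<dots> \<le> x powr r / 2"
      using assms by (intro divide_left_mono) (auto intro: order_trans[OF _ powr_mono[of 1 r 2]])
    finally show ?thesis using 2 by simp
  next
    case 3
    have "(\<lambda>x. x powr r) ((1/2) * x + (1/2) * y) \<le> (1/2) * x powr r + (1/2) * y powr r"
      using convex_onD[OF powr_convex[OF assms(1)], of "1/2" x y] 3 by auto
    then show ?thesis by (simp add: add_divide_distrib)
  qed
qed

lemma scalar_same:
  fixes p x y :: real
  assumes "2 \<le> p" "0 \<le> y" "y \<le> x"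
  shows "(phi p x - phi p y) * (x - y) \<ge> 2 powr (2 - p) * \<bar>x - y\<bar> powr p"
proof -
  have "y powr (p - 1) + (x - y) powr (p - 1) \<le> x powr (p - 1)"
    using superadd[of "p - 1" y "x - y"] assms by auto
  then have h: "(x - y) powr (p - 1) \<le> phi p x - phi p y"
    using assms by (auto simp: phi_def sgn_if)
  have le1: "2 powr (2 - p) \<le> 2 powr 0"
    using assms by (intro powr_mono) auto
  have ab: "\<bar>x - y\<bar> = x - y" using assms by simp
  have "2 powr (2 - p) * (x - y) powr p \<le> 1 * (x - y) powr p"
    by (rule mult_right_mono) (use le1 in auto)
  then have "2 powr (2 - p) * \<bar>x - y\<bar> powr p \<le> 1 * (x - y) powr p"
    by (simp only: ab)
  also have "\<dots> = (x - y) powr (p - 1) * (x - y)"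
    using assms by (cases "x = y") (auto simp: powr_diff)
  also have "\<dots> \<le> (phi p x - phi p y) * (x - y)"
    using h assms by (intro mult_right_mono) auto
  finally show ?thesis .
qed

lemma phi_neg: "phi p (- x) = - phi p x"
  by (simp add: phi_def)

lemma scalar_opp:
  fixes p x y :: real
  assumes "2 \<le> p" "y < 0" "0 < x"
  shows "(phi p x - phi p y) * (x - y) \<ge> 2 powr (2 - p) * \<bar>x - y\<bar> powr p"
proof -
  define v where "v = - y"
  have v: "0 < v" using assms v_def by auto
  have pm: "((x + v) / 2) powr (p - 1) \<le> (x powr (p - 1) + v powr (p - 1)) / 2"
    using powmean[of "p - 1" x v] assms v by auto
  have e1: "((x + v) / 2) powr (p - 1) = (x + v) powr (p - 1) / 2 powr (p - 1)"
    using v assms by (simp add: powr_divide)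
  have e2: "2 powr (2 - p) = 2 / 2 powr (p - 1)"
  proof -
    have "2 powr (2 - p) = 2 powr (1 - (p - 1))" by simp
    also have "\<dots> = 2 powr 1 / 2 powr (p - 1)" by (rule powr_diff)
    finally show ?thesis by simp
  qed
  have "2 powr (2 - p) * \<bar>x - y\<bar> powr p = 2 / 2 powr (p - 1) * ((x + v) powr (p - 1) * (x + v))"
    using v assms e2 by (simp add: v_def powr_diff)
  also have "\<dots> = (2 * (((x + v) / 2) powr (p - 1))) * (x + v)"
    using e1 by simp
  also have "\<dots> \<le> (x powr (p - 1) + v powr (p - 1)) * (x + v)"
    using pm v assms by (intro mult_right_mono) auto
  also have "\<dots> = (phi p x - phi p y) * (x - y)"
    using v assms by (simp add: phi_def v_def)
  finally show ?thesis .
qed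

lemma scalar_ineq:
  fixes p x y :: real
  assumes "2 \<le> p"
  shows "(phi p x - phi p y) * (x - y) \<ge> 2 powr (2 - p) * \<bar>x - y\<bar> powr p"
proof -
  have main: "(phi p x - phi p y) * (x - y) \<ge> 2 powr (2 - p) * \<bar>x - y\<bar> powr p"
    if "y \<le> x" for x y
  proof -
    consider "0 \<le> y" | "x \<le> 0" | "y < 0 \<and> 0 < x" by linarith
    then show ?thesis
    proof cases
      case 1 then show ?thesis using scalar_same[OF assms 1 that] by simp
    next
      case 2
      have "(phi p (-y) - phi p (-x)) * (-y - -x) \<ge> 2 powr (2 - p) * \<bar>-y - -x\<bar> powr p"
        using scalar_same[OF assms, of "-x" "-y"] 2 that by simp
      then show ?thesis by (simp add: phi_neg algebra_simps abs_minus_commute)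
    next
      case 3 then show ?thesis using scalar_opp[OF assms] by auto
    qed
  qed
  show ?thesis
  proof (cases "y \<le> x")
    case True then show ?thesis using main by simp
  next
    case False
    then have "(phi p y - phi p x) * (y - x) \<ge> 2 powr (2 - p) * \<bar>y - x\<bar> powr p" using main by simp
    then show ?thesis by (simp add: algebra_simps abs_minus_commute)
  qed
qed




lemma xlnx_convex: "convex_on {0<..} (\<lambda>x::real. x * ln x)"
proof (rule convex_on_realI[where f' = "\<lambda>x. ln x + 1"])
  show "connected ({0<..} :: real set)" by simp
  show "((\<lambda>x. x * ln x) has_real_derivative ln x + 1) (at x)" if "x \<in> {0<..}" for x :: real
    using that by (auto intro!: derivative_eq_intros)
  show "ln x + 1 \<le> ln y + 1" if "x \<in> {0<..}" "y \<in> {0<..}" "x \<le> y" for x y :: real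
    using that by auto
qed

lemma klemma:
  fixes t u :: real
  assumes "0 < t" "t < u" "u \<le> (1 + t) / 2"
  shows "2 * (u * ln u) \<le> t * ln t"
proof -
  have u2: "2 * u \<le> 1 + t" using assms by simp
  have t1: "t < 1" using assms u2 by linarith
  define l where "l = (1 - u) / (1 - t)"
  have l0: "0 \<le> l" "l \<le> 1" using assms t1 by (auto simp: l_def divide_le_eq)
  have lh: "1 / 2 \<le> l" using assms t1 by (auto simp: l_def le_divide_eq)
  have "l * (1 - t) = 1 - u" using t1 by (simp add: l_def)
  then have "l - l * t = 1 - u" by (simp add: algebra_simps)
  then have ueq: "u = (1 - l) * 1 + l * t" by (simp only: mult_1_right; linarith)
  have "(\<lambda>x. x * ln x) ((1 - l) *\<^sub>R 1 + l *\<^sub>R t) \<le> (1 - l) * (\<lambda>x. x * ln x) 1 + l * (\<lambda>x. x * ln x) t"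
    by (rule convex_onD[OF xlnx_convex]) (use l0 assms in auto)
  then have "u * ln u \<le> l * (t * ln t)" using ueq by simp
  moreover have "t * ln t \<le> 0" using assms t1 by (simp add: mult_nonneg_nonpos)
  ultimately have "l * (t * ln t) \<le> (1 / 2) * (t * ln t)"
    using lh by (intro mult_right_mono_neg) auto
  then show ?thesis using \<open>u * ln u \<le> l * (t * ln t)\<close> by linarith
qed




lemma wamgm:
  fixes a b l :: real
  assumes "0 \<le> a" "0 \<le> b" "0 \<le> l" "l \<le> 1"
  shows "a powr l * b powr (1 - l) \<le> l * a + (1 - l) * b"
proof (cases "a = 0 \<or> b = 0")
  case True
  then show ?thesis using assms by auto
next
  case False
  then show ?thesis using Youngs_inequality_0[of l "1 - l" a b] assms by auto
qed

lemma powr_aux: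
  fixes p B R :: real
  assumes p: "2 \<le> p" and B: "0 < B" and BR: "2 * B < R"
  shows "B powr (p - 1) * R \<le> 2 powr (2 - p) * R powr p * (B / R)"
proof -
  have R: "0 < R" using B BR by linarith
  have e1: "B powr (p - 1) = B powr (p - 2) * B"
  proof -
    have "B powr (p - 1) = B powr ((p - 2) + 1)" by simp
    also have "\<dots> = B powr (p - 2) * B powr 1" by (rule powr_add)
    finally show ?thesis using B by simp
  qed
  have e2: "R powr p = R powr (p - 2) * R * R"
  proof -
    have "R powr p = R powr ((p - 2) + 2)" by simp
    also have "\<dots> = R powr (p - 2) * R powr 2" by (rule powr_add)
    finally show ?thesis using R by (simp add: power2_eq_square)
  qed
  have e3: "2 powr (2 - p) * R powr (p - 2) = (R / 2) powr (p - 2)"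
    using R by (simp add: powr_divide powr_diff divide_simps)
  have m: "B powr (p - 2) \<le> (R / 2) powr (p - 2)"
    using p B BR by (intro powr_mono2) auto
  have "B powr (p - 1) * R = B powr (p - 2) * (B * R)" using e1 by simp
  also have "\<dots> \<le> (R / 2) powr (p - 2) * (B * R)"
    using m B R by (intro mult_right_mono) auto
  also have "\<dots> = 2 powr (2 - p) * R powr p * (B / R)"
    using R by (simp add: e2 e3[symmetric])
  finally show ?thesis .
qed

lemma log_part:
  fixes A B R l :: real
  assumes B: "0 < B" and BR: "2 * B < R" and RAB: "R \<le> A + B" and BA: "B \<le> A"
    and l: "0 \<le> l" "l \<le> 1" and lB: "1 - l \<le> B / R"
  shows "R / 2 \<le> A powr l * B powr (1 - l)"
proof -
  have R: "0 < R" using B BR by linarith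
  have A: "0 < A" using B BA by linarith
  define t where "t = B / A"
  define u where "u = R / (2 * A)"
  have t0: "0 < t" using A B by (simp add: t_def)
  have tu: "t < u" using A BR by (simp add: t_def u_def divide_simps)
  have u1: "u \<le> (1 + t) / 2" using A RAB by (simp add: t_def u_def divide_simps)
  have k: "2 * (u * ln u) \<le> t * ln t" by (rule klemma[OF t0 tu u1])
  have lnu: "ln u = ln (R / 2) - ln A" using A R by (simp add: u_def ln_div ln_mult)
  have lnt: "ln t = ln B - ln A" using A B by (simp add: t_def ln_div)
  have "A * (2 * (u * ln u)) \<le> A * (t * ln t)" using k A by (intro mult_left_mono) auto
  moreover have "A * (2 * (u * ln u)) = R * (ln (R / 2) - ln A)"
  proof -
    have e: "A * 2 * u = R" using A by (simp add: u_def)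
    have "A * (2 * (u * ln u)) = R * ln u" by (simp add: e[symmetric] mult.assoc)
    then show ?thesis by (simp only: lnu)
  qed
  moreover have "A * (t * ln t) = B * (ln B - ln A)"
  proof -
    have e: "A * t = B" using A by (simp add: t_def)
    have "A * (t * ln t) = B * ln t" by (simp add: e[symmetric] mult.assoc)
    then show ?thesis by (simp only: lnt)
  qed
  ultimately have k2: "R * (ln (R / 2) - ln A) \<le> B * (ln B - ln A)" by simp
  have d0: "0 \<le> ln A - ln B" using A B BA by simp
  have "(1 - l) * (ln A - ln B) \<le> (B / R) * (ln A - ln B)"
    using lB d0 by (intro mult_right_mono) auto
  also have "\<dots> = (B * (ln A - ln B)) / R" by simp
  also have "\<dots> \<le> (R * (ln A - ln (R / 2))) / R"
    using k2 R by (intro divide_right_mono) (auto simp: algebra_simps)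
  also have "\<dots> = ln A - ln (R / 2)" using R by simp
  finally have main: "(1 - l) * (ln A - ln B) \<le> ln A - ln (R / 2)" .
  have "ln (A powr l * B powr (1 - l)) = l * ln A + (1 - l) * ln B"
    using A B by (simp add: ln_mult ln_powr)
  also have "\<dots> = ln A - (1 - l) * (ln A - ln B)" by (simp add: algebra_simps)
  finally have "ln (R / 2) \<le> ln (A powr l * B powr (1 - l))" using main by linarith
  then show ?thesis using R A B by simp
qed

lemma key_real:
  fixes p q A B R P1 P0 :: real
  assumes p: "2 \<le> p" and q: "0 \<le> q" and BA: "B \<le> A" and B0: "0 \<le> B"
    and R0: "0 \<le> R" and RAB: "R \<le> A + B"
    and P1: "0 \<le> P1" and P0: "- P0 \<le> B powr (p - 1) * R"
    and PP: "2 powr (2 - p) * R powr p \<le> P1 - P0"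
  shows "2 powr (2 - p) * R powr p * (R / 2) powr q \<le> A powr q * P1 - B powr q * P0"
proof -
  define c where "c = 2 powr (2 - p) * R powr p"
  have c0: "0 \<le> c" by (simp add: c_def)
  have PP': "c \<le> P1 - P0" using PP by (simp add: c_def)
  have RA: "R / 2 \<le> A" using RAB BA by simp
  have mono: "x powr q \<le> y powr q" if "0 \<le> x" "x \<le> y" for x y :: real
    by (rule powr_mono2) (use that q in auto)
  have RqA: "(R / 2) powr q \<le> A powr q" using mono R0 RA by simp
  have cA: "c * (R / 2) powr q \<le> c * A powr q" by (rule mult_left_mono) (use RqA c0 in auto)
  have BqA: "B powr q \<le> A powr q" using mono B0 BA by simp
  have Aq0: "0 \<le> A powr q" and Bq0: "0 \<le> B powr q" by auto
  have cAc: "c * A powr q = A powr q * c" by simp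
  have "c * (R / 2) powr q \<le> A powr q * P1 - B powr q * P0"
  proof (cases "0 \<le> P0")
    case True
    have h1: "B powr q * P0 \<le> A powr q * P0" by (rule mult_right_mono) (use BqA True in auto)
    have "A powr q * c \<le> A powr q * (P1 - P0)" by (rule mult_left_mono) (use PP' Aq0 in auto)
    then have h2: "A powr q * c \<le> A powr q * P1 - A powr q * P0" by (simp add: right_diff_distrib)
    show ?thesis using h1 h2 cA cAc by linarith
  next
    case False
    define m where "m = - P0"
    have m0: "0 < m" using False by (simp add: m_def)
    have Bpos: "0 < B"
    proof (rule ccontr)
      assume "\<not> 0 < B"
      then have "B = 0" using B0 by simp
      then show False using P0 m0 by (simp add: m_def)
    qed
    have PPm: "c \<le> P1 + m" using PP' by (simp add: m_def)
    have lhs: "A powr q * P1 - B powr q * P0 = A powr q * P1 + B powr q * m" by (simp add: m_def)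
    show ?thesis
    proof (cases "R / 2 \<le> B")
      case True
      have a1: "c * (R / 2) powr q \<le> c * B powr q"
        by (rule mult_left_mono) (use mono[OF _ True] R0 c0 in auto)
      have a2: "B powr q * c \<le> B powr q * (P1 + m)" by (rule mult_left_mono) (use PPm Bq0 in auto)
      have a3: "B powr q * P1 \<le> A powr q * P1" by (rule mult_right_mono) (use BqA P1 in auto)
      have a4: "B powr q * (P1 + m) = B powr q * P1 + B powr q * m" by (simp add: distrib_left)
      have a5: "c * B powr q = B powr q * c" by simp
      show ?thesis using a1 a2 a3 a4 a5 lhs by linarith
    next
      case RB: False
      show ?thesis
      proof (cases "c \<le> P1")
        case True
        have a1: "A powr q * c \<le> A powr q * P1" by (rule mult_left_mono) (use True Aq0 in auto)
        have a2: "0 \<le> B powr q * m" using m0 Bq0 by simp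
        show ?thesis using a1 a2 cA lhs cAc by linarith
      next
        case cP: False
        have Rpos: "0 < R" using RB Bpos by linarith
        have cpos: "0 < c" using Rpos by (simp add: c_def)
        define l where "l = P1 / c"
        have l0: "0 \<le> l" "l \<le> 1" using P1 cpos cP by (auto simp: l_def divide_le_eq)
        have s1: "A powr q * P1 + B powr q * (c - P1) \<le> A powr q * P1 + B powr q * m"
          using PPm Bq0 by (simp add: mult_left_mono)
        have s2: "A powr q * P1 + B powr q * (c - P1) = c * (l * A powr q + (1 - l) * B powr q)"
          using cpos by (simp add: l_def field_simps)
        have s3: "(A powr q) powr l * (B powr q) powr (1 - l) \<le> l * A powr q + (1 - l) * B powr q"
          by (rule wamgm) (use l0 in auto)
        have s4: "(A powr q) powr l * (B powr q) powr (1 - l) = (A powr l * B powr (1 - l)) powr q"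
          by (simp add: powr_powr powr_mult mult.commute)
        have BR2: "2 * B < R" using RB by simp
        have lB: "1 - l \<le> B / R"
        proof -
          have "1 - l = (c - P1) / c" using cpos by (simp add: l_def field_simps)
          also have "\<dots> \<le> (B powr (p - 1) * R) / c"
            using PPm P0 cpos by (intro divide_right_mono) (auto simp: m_def)
          also have "\<dots> \<le> (c * (B / R)) / c"
            using powr_aux[OF p Bpos BR2] cpos by (intro divide_right_mono) (auto simp: c_def)
          also have "\<dots> = B / R" using cpos by simp
          finally show ?thesis .
        qed
        have s5: "R / 2 \<le> A powr l * B powr (1 - l)"
          by (rule log_part[OF Bpos BR2 RAB BA l0 lB])
        have s6: "(R / 2) powr q \<le> (A powr l * B powr (1 - l)) powr q"
          using mono[OF _ s5] R0 by simp
        have "c * (R / 2) powr q \<le> c * ((A powr l * B powr (1 - l)) powr q)"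
          using s6 c0 by (rule mult_left_mono)
        also have "\<dots> \<le> c * (l * A powr q + (1 - l) * B powr q)"
          using s3 s4 c0 by (simp add: mult_left_mono)
        finally show ?thesis using s1 s2 lhs by linarith
      qed
    qed
  qed
  then show ?thesis by (simp add: c_def)
qed




definition Sf :: "real \<Rightarrow> real ^ 'd \<Rightarrow> real" where
  "Sf p z = (\<Sum>i\<in>UNIV. \<bar>z $ i\<bar> powr p)"

definition Phi :: "real \<Rightarrow> real ^ 'd \<Rightarrow> real ^ 'd" where
  "Phi p z = (\<chi> i. phi p (z $ i))"

lemma Sf_nonneg: "0 \<le> Sf p z"
  by (simp add: Sf_def sum_nonneg)

lemma pnorm_Sf: "pnorm p z = Sf p z powr (1 / p)"
  by (simp add: pnorm_def Sf_def)

lemma pnorm_nonneg: "0 \<le> pnorm p z"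
  by (simp add: pnorm_def)

lemma pnorm_powr: assumes "0 < p" shows "pnorm p z powr p = Sf p z"
  using assms Sf_nonneg[of p z] by (simp add: pnorm_Sf powr_powr)

lemma Sf_zero_iff: assumes "0 < p" shows "Sf p z = 0 \<longleftrightarrow> z = 0"
proof
  assume "Sf p z = 0"
  then have "\<forall>i\<in>UNIV. \<bar>z $ i\<bar> powr p = 0"
    unfolding Sf_def by (subst sum_nonneg_eq_0_iff[symmetric]) auto
  then show "z = 0" by (simp add: vec_eq_iff)
qed (simp add: Sf_def)

lemma pnorm_zero_iff: assumes "0 < p" shows "pnorm p z = 0 \<longleftrightarrow> z = 0"
  using Sf_zero_iff[OF assms, of z] Sf_nonneg[of p z] by (simp add: pnorm_Sf)

lemma pnorm_pos: assumes "0 < p" "z \<noteq> 0" shows "0 < pnorm p z"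
  using pnorm_zero_iff[OF assms(1)] pnorm_nonneg[of p z] assms(2) by fastforce

lemma pnorm_uminus: "pnorm p (- z) = pnorm p z"
  by (simp add: pnorm_def)

lemma pnorm_commute: "pnorm p (a - b) = pnorm p (b - a)"
  using pnorm_uminus[of p "a - b"] by simp

lemma Phi_zero[simp]: "Phi p 0 = 0"
  by (simp add: Phi_def phi_def vec_eq_iff)

lemma phi_mult_self: "phi p x * x = \<bar>x\<bar> powr (p - 1) * \<bar>x\<bar>"
  by (simp add: phi_def sgn_if)

lemma abs_powr_split: fixes x p :: real assumes "1 \<le> p" shows "\<bar>x\<bar> powr (p - 1) * \<bar>x\<bar> = \<bar>x\<bar> powr p"
proof (cases "x = 0")
  case True then show ?thesis using assms by simp
next
  case False
  have "\<bar>x\<bar> powr p = \<bar>x\<bar> powr ((p - 1) + 1)" by simp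
  also have "\<dots> = \<bar>x\<bar> powr (p - 1) * \<bar>x\<bar> powr 1" by (rule powr_add)
  finally show ?thesis using False by simp
qed

lemma Phi_self: assumes "1 \<le> p" shows "Phi p z \<bullet> z = Sf p z"
  by (simp add: Phi_def inner_vec_def Sf_def phi_mult_self abs_powr_split[OF assms])

lemma holder_abs:
  fixes x y :: "real ^ 'd"
  assumes p: "2 \<le> p"
  shows "(\<Sum>i\<in>UNIV. \<bar>x $ i\<bar> powr (p - 1) * \<bar>y $ i\<bar>) \<le> pnorm p x powr (p - 1) * pnorm p y"
proof (cases "x = 0 \<or> y = 0")
  case True
  then show ?thesis using p by (auto simp: pnorm_def)
next
  case False
  define X where "X = pnorm p x"
  define Y where "Y = pnorm p y"
  have X: "0 < X" using False p pnorm_pos[of p x] by (simp add: X_def)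
  have Y: "0 < Y" using False p pnorm_pos[of p y] by (simp add: Y_def)
  define l where "l = (p - 1) / p"
  have l: "0 \<le> l" "l \<le> 1" using p by (auto simp: l_def)
  have pl: "p * l = p - 1" "p * (1 - l) = 1" using p by (auto simp: l_def field_simps)
  have tm: "\<bar>x $ i\<bar> powr (p - 1) * \<bar>y $ i\<bar> \<le> X powr (p - 1) * Y *
      (l * (\<bar>x $ i\<bar> powr p / X powr p) + (1 - l) * (\<bar>y $ i\<bar> powr p / Y powr p))" for i
  proof -
    have w: "((\<bar>x $ i\<bar> / X) powr p) powr l * ((\<bar>y $ i\<bar> / Y) powr p) powr (1 - l)
        \<le> l * (\<bar>x $ i\<bar> / X) powr p + (1 - l) * (\<bar>y $ i\<bar> / Y) powr p"
      by (rule wamgm) (use l in auto)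
    have e1: "((\<bar>x $ i\<bar> / X) powr p) powr l = (\<bar>x $ i\<bar> / X) powr (p - 1)"
      by (simp add: powr_powr pl)
    have e2: "((\<bar>y $ i\<bar> / Y) powr p) powr (1 - l) = \<bar>y $ i\<bar> / Y"
      using Y by (simp add: powr_powr pl)
    have e3: "(\<bar>x $ i\<bar> / X) powr (p - 1) = \<bar>x $ i\<bar> powr (p - 1) / X powr (p - 1)"
      using X by (simp add: powr_divide)
    have e4: "(\<bar>x $ i\<bar> / X) powr p = \<bar>x $ i\<bar> powr p / X powr p"
      using X by (simp add: powr_divide)
    have e5: "(\<bar>y $ i\<bar> / Y) powr p = \<bar>y $ i\<bar> powr p / Y powr p"
      using Y by (simp add: powr_divide)
    have "\<bar>x $ i\<bar> powr (p - 1) * \<bar>y $ i\<bar> = X powr (p - 1) * Y * ((\<bar>x $ i\<bar> / X) powr (p - 1) * (\<bar>y $ i\<bar> / Y))"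
      using X Y by (simp add: e3)
    also have "\<dots> \<le> X powr (p - 1) * Y * (l * (\<bar>x $ i\<bar> / X) powr p + (1 - l) * (\<bar>y $ i\<bar> / Y) powr p)"
      using w X Y by (intro mult_left_mono) (auto simp: e1 e2)
    finally show ?thesis by (simp add: e4 e5)
  qed
  have "(\<Sum>i\<in>UNIV. \<bar>x $ i\<bar> powr (p - 1) * \<bar>y $ i\<bar>) \<le>
      (\<Sum>i\<in>UNIV. X powr (p - 1) * Y * (l * (\<bar>x $ i\<bar> powr p / X powr p) + (1 - l) * (\<bar>y $ i\<bar> powr p / Y powr p)))"
    by (rule sum_mono) (rule tm)
  also have "\<dots> = X powr (p - 1) * Y * (l * (Sf p x / X powr p) + (1 - l) * (Sf p y / Y powr p))"
    by (simp add: sum_distrib_left[symmetric] sum.distrib sum_divide_distrib[symmetric] Sf_def)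
  also have "\<dots> = X powr (p - 1) * Y"
  proof -
    have "X powr p = Sf p x" "Y powr p = Sf p y" using p by (simp_all add: X_def Y_def pnorm_powr)
    moreover have "0 < X powr p" "0 < Y powr p" using X Y by auto
    ultimately show ?thesis by simp
  qed
  finally show ?thesis by (simp add: X_def Y_def)
qed

lemma holder:
  fixes x y :: "real ^ 'd"
  assumes p: "2 \<le> p"
  shows "Phi p x \<bullet> y \<le> pnorm p x powr (p - 1) * pnorm p y"
proof -
  have "Phi p x \<bullet> y \<le> (\<Sum>i\<in>UNIV. \<bar>x $ i\<bar> powr (p - 1) * \<bar>y $ i\<bar>)"
    unfolding Phi_def inner_vec_def
    by (rule sum_mono) (auto simp: phi_def sgn_if abs_mult)
  also have "\<dots> \<le> pnorm p x powr (p - 1) * pnorm p y" by (rule holder_abs[OF p])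
  finally show ?thesis .
qed




lemma powr_split_R:
  fixes R p s :: real
  assumes "0 \<le> R" "0 < p" "p \<le> s"
  shows "2 powr (2 - s) * R powr s = 2 powr (2 - p) * R powr p * (R / 2) powr (s - p)"
proof (cases "R = 0")
  case True then show ?thesis using assms by simp
next
  case False
  then have R: "0 < R" using assms by simp
  have e1: "2 powr (2 - s) = 2 powr (2 - p) / 2 powr (s - p)"
  proof -
    have "2 powr (2 - s) = 2 powr ((2 - p) - (s - p))" by simp
    also have "\<dots> = 2 powr (2 - p) / 2 powr (s - p)" by (rule powr_diff)
    finally show ?thesis .
  qed
  have e2: "R powr s = R powr p * R powr (s - p)"
  proof -
    have "R powr s = R powr (p + (s - p))" by simp
    also have "\<dots> = R powr p * R powr (s - p)" by (rule powr_add)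
    finally show ?thesis .
  qed
  have e3: "(R / 2) powr (s - p) = R powr (s - p) / 2 powr (s - p)"
    using R by (simp add: powr_divide)
  show ?thesis by (simp add: e1 e2 e3)
qed

lemma vec_key_ord:
  fixes a b :: "real ^ 'd"
  assumes p: "2 \<le> p" and ps: "p \<le> s" and ord: "pnorm p b \<le> pnorm p a"
  shows "2 powr (2 - s) * pnorm p (a - b) powr s \<le>
    pnorm p a powr (s - p) * (Phi p a \<bullet> (a - b)) - pnorm p b powr (s - p) * (Phi p b \<bullet> (a - b))"
proof -
  define A where "A = pnorm p a"
  define B where "B = pnorm p b"
  define R where "R = pnorm p (a - b)"
  define P1 where "P1 = Phi p a \<bullet> (a - b)"
  define P0 where "P0 = Phi p b \<bullet> (a - b)"
  have A0: "0 \<le> A" and B0: "0 \<le> B" and R0: "0 \<le> R"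
    by (simp_all add: A_def B_def R_def pnorm_nonneg)
  have p1: "1 \<le> p" using p by simp
  have powsplit: "X powr p = X powr (p - 1) * X" if "0 \<le> X" for X :: real
    using abs_powr_split[OF p1, of X] that by simp
  have PP: "2 powr (2 - p) * R powr p \<le> P1 - P0"
  proof -
    have "P1 - P0 = (\<Sum>i\<in>UNIV. (phi p (a $ i) - phi p (b $ i)) * (a $ i - b $ i))"
      by (simp add: P1_def P0_def Phi_def inner_vec_def sum_subtractf[symmetric] algebra_simps)
    also have "\<dots> \<ge> (\<Sum>i\<in>UNIV. 2 powr (2 - p) * \<bar>a $ i - b $ i\<bar> powr p)"
      by (rule sum_mono) (rule scalar_ineq[OF p])
    finally have "(\<Sum>i\<in>UNIV. 2 powr (2 - p) * \<bar>a $ i - b $ i\<bar> powr p) \<le> P1 - P0" .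
    moreover have "(\<Sum>i\<in>UNIV. 2 powr (2 - p) * \<bar>a $ i - b $ i\<bar> powr p) = 2 powr (2 - p) * R powr p"
      using p by (simp add: sum_distrib_left[symmetric] R_def pnorm_powr Sf_def)
    ultimately show ?thesis by simp
  qed
  have RAB: "R \<le> A + B"
  proof (cases "R = 0")
    case True then show ?thesis using A0 B0 by simp
  next
    case False
    then have Rp: "0 < R" using R0 by simp
    have "R powr p = Phi p (a - b) \<bullet> (a - b)"
      using p by (simp add: R_def pnorm_powr Phi_self[OF p1])
    also have "\<dots> = Phi p (a - b) \<bullet> a + Phi p (a - b) \<bullet> (- b)"
      by (simp add: inner_diff_right)
    also have "\<dots> \<le> R powr (p - 1) * A + R powr (p - 1) * B"
      using holder[OF p, of "a - b" a] holder[OF p, of "a - b" "- b"]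
      by (simp add: R_def A_def B_def pnorm_uminus)
    finally have "R powr (p - 1) * R \<le> R powr (p - 1) * (A + B)"
      using powsplit[OF R0] by (simp add: distrib_left)
    then show ?thesis using Rp by (simp add: mult_le_cancel_left_pos)
  qed
  have P1: "0 \<le> P1"
  proof -
    have "P1 = A powr p - Phi p a \<bullet> b"
      using p by (simp add: P1_def A_def inner_diff_right Phi_self[OF p1] pnorm_powr)
    moreover have "Phi p a \<bullet> b \<le> A powr (p - 1) * B"
      using holder[OF p, of a b] by (simp add: A_def B_def)
    moreover have "A powr (p - 1) * B \<le> A powr (p - 1) * A"
      using ord by (intro mult_left_mono) (auto simp: A_def B_def)
    ultimately show ?thesis using powsplit[OF A0] by simp
  qed
  have P0: "- P0 \<le> B powr (p - 1) * R"
  proof -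
    have "- P0 = Phi p b \<bullet> (b - a)" by (simp add: P0_def inner_diff_right)
    also have "\<dots> \<le> B powr (p - 1) * R"
      using holder[OF p, of b "b - a"] by (simp add: B_def R_def pnorm_commute[of p b a])
    finally show ?thesis .
  qed
  have "2 powr (2 - p) * R powr p * (R / 2) powr (s - p) \<le> A powr (s - p) * P1 - B powr (s - p) * P0"
    by (rule key_real[OF p _ _ B0 R0 RAB P1 P0 PP]) (use ps ord in \<open>auto simp: A_def B_def\<close>)
  moreover have "2 powr (2 - s) * R powr s = 2 powr (2 - p) * R powr p * (R / 2) powr (s - p)"
    using R0 p ps by (intro powr_split_R) auto
  ultimately show ?thesis by (simp add: A_def B_def R_def P1_def P0_def)
qed

lemma vec_key:
  fixes a b :: "real ^ 'd"
  assumes p: "2 \<le> p" and ps: "p \<le> s"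
  shows "2 powr (2 - s) * pnorm p (a - b) powr s \<le>
    pnorm p a powr (s - p) * (Phi p a \<bullet> (a - b)) - pnorm p b powr (s - p) * (Phi p b \<bullet> (a - b))"
proof (cases "pnorm p b \<le> pnorm p a")
  case True then show ?thesis using vec_key_ord[OF p ps] by blast
next
  case False
  then have "2 powr (2 - s) * pnorm p (b - a) powr s \<le>
    pnorm p b powr (s - p) * (Phi p b \<bullet> (b - a)) - pnorm p a powr (s - p) * (Phi p a \<bullet> (b - a))"
    using vec_key_ord[OF p ps, of a b] by simp
  then show ?thesis
    by (simp add: pnorm_commute[of p b a] inner_diff_right algebra_simps)
qed




definition G :: "real \<Rightarrow> real \<Rightarrow> real ^ 'd \<Rightarrow> real ^ 'd" where
  "G p s z = (s * pnorm p z powr (s - p)) *\<^sub>R Phi p z"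

lemma dS:
  fixes z :: "real ^ 'd"
  assumes p: "1 < p"
  shows "(Sf p has_derivative (\<lambda>v. (p *\<^sub>R Phi p z) \<bullet> v)) (at z)"
proof -
  have each: "((\<lambda>z. \<bar>z $ i\<bar> powr p) has_derivative
      (\<lambda>v. (p * \<bar>z $ i\<bar> powr (p - 1) * sgn (z $ i)) * v $ i)) (at z)" for i
    using has_derivative_compose[OF bounded_linear_imp_has_derivative[OF bounded_linear_vec_nth]
        abs_powr_deriv[OF p, of "z $ i", unfolded has_field_derivative_def]] by simp
  have d1: "((\<lambda>z. \<Sum>i\<in>UNIV. \<bar>z $ i\<bar> powr p) has_derivative
      (\<lambda>v. \<Sum>i\<in>UNIV. (p * \<bar>z $ i\<bar> powr (p - 1) * sgn (z $ i)) * v $ i)) (at z)"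
    by (rule has_derivative_sum) (rule each)
  have d2: "Sf p = (\<lambda>z. \<Sum>i\<in>UNIV. \<bar>z $ i\<bar> powr p)" by (rule ext) (simp add: Sf_def)
  have d3: "(\<lambda>v. \<Sum>i\<in>UNIV. (p * \<bar>z $ i\<bar> powr (p - 1) * sgn (z $ i)) * v $ i)
      = (\<lambda>v. (p *\<^sub>R Phi p z) \<bullet> v)"
    by (rule ext) (simp add: inner_vec_def Phi_def phi_def mult.assoc)
  show ?thesis unfolding d2 by (rule has_derivative_eq_rhs[OF d1 d3])
qed

lemma h_eq:
  assumes p: "0 < p"
  shows "pnorm p z powr s = \<bar>Sf p z\<bar> powr (s / p)"
  using Sf_nonneg[of p z] by (simp add: pnorm_Sf powr_powr)

lemma dh:
  fixes z :: "real ^ 'd"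
  assumes p: "2 \<le> p" and ps: "p \<le> s"
  shows "((\<lambda>z. pnorm p z powr s) has_derivative (\<lambda>v. G p s z \<bullet> v)) (at z)"
proof (cases "s = p")
  case True
  have hf: "\<And>z. pnorm p z powr s = Sf p z"
    using p True by (auto simp: pnorm_powr)
  have geq: "(\<lambda>v. (p *\<^sub>R Phi p z) \<bullet> v) = (\<lambda>v. G p s z \<bullet> v)"
  proof (cases "z = 0")
    case True then show ?thesis by (simp add: G_def)
  next
    case False
    then have "0 < pnorm p z" using p pnorm_pos[of p z] by simp
    then show ?thesis using \<open>s = p\<close> by (simp add: G_def)
  qed
  have hf2: "(\<lambda>z. pnorm p z powr s) = Sf p" by (rule ext) (rule hf)
  have p1: "1 < p" using p by simp
  show ?thesis unfolding hf2 by (rule has_derivative_eq_rhs[OF dS[OF p1] geq])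
next
  case False
  then have sp: "p < s" using ps by simp
  define r where "r = s / p"
  have r: "1 < r" using sp p by (simp add: r_def)
  have hf: "\<And>z. pnorm p z powr s = \<bar>Sf p z\<bar> powr r"
    using p by (auto simp: h_eq r_def)
  define D where "D = r * \<bar>Sf p z\<bar> powr (r - 1) * sgn (Sf p z)"
  have dd: "((\<lambda>z. \<bar>Sf p z\<bar> powr r) has_derivative (\<lambda>v. D * ((p *\<^sub>R Phi p z) \<bullet> v))) (at z)"
    using has_derivative_compose[OF dS[of p z] abs_powr_deriv[OF r, of "Sf p z", unfolded has_field_derivative_def]] p
    by (simp add: D_def)
  have geq: "(\<lambda>v. D * ((p *\<^sub>R Phi p z) \<bullet> v)) = (\<lambda>v. G p s z \<bullet> v)"
  proof (cases "z = 0")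
    case True then show ?thesis by (simp add: G_def)
  next
    case False
    have Spos: "0 < Sf p z" using False Sf_zero_iff[of p z] Sf_nonneg[of p z] p by auto
    have e1: "pnorm p z powr (s - p) = Sf p z powr (r - 1)"
      using Spos p by (simp add: pnorm_Sf powr_powr r_def diff_divide_distrib)
    have e2: "D * p = s * Sf p z powr (r - 1)"
      using Spos p by (simp add: D_def r_def)
    show ?thesis
    proof (rule ext)
      fix v
      have "D * ((p *\<^sub>R Phi p z) \<bullet> v) = (D * p) * (Phi p z \<bullet> v)" by simp
      also have "\<dots> = G p s z \<bullet> v" by (simp add: e2 e1 G_def)
      finally show "D * ((p *\<^sub>R Phi p z) \<bullet> v) = G p s z \<bullet> v" .
    qed
  qed
  have hf2: "(\<lambda>z. pnorm p z powr s) = (\<lambda>z. \<bar>Sf p z\<bar> powr r)" by (rule ext) (rule hf)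
  show ?thesis unfolding hf2 by (rule has_derivative_eq_rhs[OF dd geq])
qed

lemma grad_eq:
  fixes h :: "real ^ 'd \<Rightarrow> real" and g :: "real ^ 'd"
  assumes "(h has_derivative (\<lambda>v. g \<bullet> v)) (at z)"
  shows "grad h z = g"
proof -
  have ex: "\<exists>g. (h has_derivative (\<lambda>v. g \<bullet> v)) (at z)" using assms by blast
  have "(h has_derivative (\<lambda>v. grad h z \<bullet> v)) (at z)"
    unfolding grad_def by (rule someI_ex[OF ex])
  then have fe: "(\<lambda>v. grad h z \<bullet> v) = (\<lambda>v. g \<bullet> v)" using assms by (rule has_derivative_unique)
  have "(grad h z - g) \<bullet> (grad h z - g) = 0"
    using fun_cong[OF fe, of "grad h z - g"] by (simp add: inner_diff_left)
  then show ?thesis by simp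
qed

theorem mainTheorem2:
  fixes p s :: real and h :: "real ^ 'd \<Rightarrow> real"
  assumes "2 \<le> p" and "p \<le> s"
    and "\<And>z. h z = pnorm p z powr s"
  shows "\<forall>za zb. bregman h za zb + bregman h zb za
            \<ge> (4 * s / 2 powr s) * pnorm p (za - zb) powr s"
proof (intro allI)
  fix za zb :: "real ^ 'd"
  have hf: "h = (\<lambda>z. pnorm p z powr s)" by (rule ext) (simp add: assms(3))
  have gr: "grad h z = G p s z" for z
    using dh[OF assms(1,2), of z] hf by (simp add: grad_eq)
  have s0: "0 \<le> s" using assms by simp
  have "bregman h za zb + bregman h zb za = (G p s za - G p s zb) \<bullet> (za - zb)"
    by (simp add: bregman_def gr inner_diff_left inner_diff_right algebra_simps)
  also have "\<dots> = s * (pnorm p za powr (s - p) * (Phi p za \<bullet> (za - zb))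
      - pnorm p zb powr (s - p) * (Phi p zb \<bullet> (za - zb)))"
    by (simp add: G_def inner_diff_left algebra_simps)
  finally have eq: "bregman h za zb + bregman h zb za = s * (pnorm p za powr (s - p) * (Phi p za \<bullet> (za - zb))
      - pnorm p zb powr (s - p) * (Phi p zb \<bullet> (za - zb)))" .
  have ineq: "s * (2 powr (2 - s) * pnorm p (za - zb) powr s) \<le> s * (pnorm p za powr (s - p) * (Phi p za \<bullet> (za - zb))
      - pnorm p zb powr (s - p) * (Phi p zb \<bullet> (za - zb)))"
    using vec_key[OF assms(1,2), of za zb] s0 by (rule mult_left_mono)
  have t4: "2 powr (2 - s) = 4 / 2 powr s"
  proof -
    have "2 powr (2 - s) = 2 powr 2 / 2 powr s" by (rule powr_diff)
    then show ?thesis by simp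
  qed
  have "(4 * s / 2 powr s) * pnorm p (za - zb) powr s = s * (2 powr (2 - s) * pnorm p (za - zb) powr s)"
    by (simp add: t4)
  then show "(4 * s / 2 powr s) * pnorm p (za - zb) powr s \<le> bregman h za zb + bregman h zb za"
    using eq ineq by linarith
qed


end
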